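(* Run the mechanism BFM-VM described in the context with arbitrary $B>0$, $\alpha>1$, $\ell\in\{1,2\}$, with all sellers behaving truthfully. Then $$\sum_{i=1}^{\ell}\sum_{t=1}^{M}v(S_{i,t})\ \le\ \frac{4\alpha-2}{\alpha-1}\,v(S^* ).$$
   Context: Setting. $\mathcal{N}$ is a finite set of $n$ sellers. The valuation $v:2^{\mathcal{N}}\to\mathbb{R}_{\ge 0}$ satisfies $v(\emptyset)=0$ and is submodular (for $X\subseteq Y\subseteq\mathcal{N}$ and $u\notin Y$, $v(u\mid Y)\le v(u\mid X)$), not necessarily monotone, where $v(S\mid T)=v(S\cup T)-v(T)$, $v(u\mid T)=v(\{u\}\mid T)$, $v(u)=v(\{u\})$. Each seller $u$ has a private cost $c(u)\ge 0$. $B>0$ is the budget, $[\ell]=\{1,\dots,\ell\}$. Sellers behave truthfully: a seller $u$ offered price $q$ accepts iff $c(u)\le q$. Mechanism BFM-VM (inputs $B$, $\alpha>1$, $\ell\in\{1,2\}$): 1. Offer every seller the price $B$; let $R$ be the set of sellers who accept, and set $p(u)=B$ for $u\in R$. 2. Set $t=1$, $\rho_1=\max_{u\in R}v(u)$, $S_{1,1}=\{u_0\}$ for some $u_0\in\arg\max_{u\in R}v(u)$, and (if $\ell=2$) $S_{2,1}=\emptyset$. 3. Repeat rounds: set $t\leftarrow t+1$, $\rho_t=\alpha\rho_{t-1}$, $S_{i,t}=\emptyset$ for $i\in[\ell]$. Process the sellers $u\in R\setminus\bigcup_{i=1}^{\ell}S_{i,t-1}$ one at a time in a fixed order. For each such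 $u$: pick $j\in\arg\max_{i\in[\ell]}v(u\mid S_{i,t})$ (current contents); update $p(u)\leftarrow\min\{p(u),\ v(u\mid S_{j,t})/(\rho_t/B)\}$ and offer $p(u)$ to $u$. If $u$ accepts: if $v(S_{j,t}\cup\{u\})>\rho_t$, end the round immediately; otherwise add $u$ to $S_{j,t}$. If $u$ rejects, remove $u$ from $R$. After the round, stop if $R\setminus\bigcup_{i=1}^{\ell}(S_{i,t-1}\cup S_{i,t})=\emptyset$; otherwise start another round. 4. Let $M$ be the final value of $t$. Output $S^*\in\arg\max_{A\in\{S_{i,t}: i\in[\ell],\ t\in\{M-1,M\}\}}v(A)$, paying each $u\in S^*$ its current price $p(u)$. Notation: $S_{i,t}$ denotes the contents of that candidate set at the end of round $t$. *)

theory Defs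
  imports Complex_Main
begin

definition marg :: "('a set \<Rightarrow> real) \<Rightarrow> 'a \<Rightarrow> 'a set \<Rightarrow> real" where
  "marg v u S = v (insert u S) - v S"

definition submodular_on :: "'a set \<Rightarrow> ('a set \<Rightarrow> real) \<Rightarrow> bool" where
  "submodular_on N v \<longleftrightarrow>
     (\<forall>X Y u. X \<subseteq> Y \<longrightarrow> Y \<subseteq> N \<longrightarrow> u \<in> N \<longrightarrow> u \<notin> Y \<longrightarrow> marg v u Y \<le> marg v u X)"

text \<open>The arguments are:
  the list of sellers still to be processed (in the fixed order), the current
  set R, the current prices p, the current contents T i of the candidate sets
  S_{i,t} (i \<in> {1..l}); and the corresponding values at the end of the round.
  The choice of j among the maximisers is arbitrary (nondeterministic).
  Sellers are truthful: u accepts price q iff c u \<le> q.\<close>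
inductive bfm_round ::
  "('a set \<Rightarrow> real) \<Rightarrow> ('a \<Rightarrow> real) \<Rightarrow> real \<Rightarrow> nat \<Rightarrow> real \<Rightarrow>
   'a list \<Rightarrow> 'a set \<Rightarrow> ('a \<Rightarrow> real) \<Rightarrow> (nat \<Rightarrow> 'a set) \<Rightarrow>
   'a set \<Rightarrow> ('a \<Rightarrow> real) \<Rightarrow> (nat \<Rightarrow> 'a set) \<Rightarrow> bool"
  for v c B l rho
where
  finish: "bfm_round v c B l rho [] R p T R p T"
| reject: "\<lbrakk> j \<in> {1..l}; \<forall>i\<in>{1..l}. marg v u (T i) \<le> marg v u (T j);
            q = min (p u) (marg v u (T j) / (rho / B));
            \<not> c u \<le> q;
            bfm_round v c B l rho us (R - {u}) (p(u := q)) T R' p' T' \<rbrakk>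
          \<Longrightarrow> bfm_round v c B l rho (u # us) R p T R' p' T'"
| stop: "\<lbrakk> j \<in> {1..l}; \<forall>i\<in>{1..l}. marg v u (T i) \<le> marg v u (T j);
            q = min (p u) (marg v u (T j) / (rho / B));
            c u \<le> q; v (insert u (T j)) > rho \<rbrakk>
          \<Longrightarrow> bfm_round v c B l rho (u # us) R p T R (p(u := q)) T"
| add: "\<lbrakk> j \<in> {1..l}; \<forall>i\<in>{1..l}. marg v u (T i) \<le> marg v u (T j);
            q = min (p u) (marg v u (T j) / (rho / B));
            c u \<le> q; \<not> v (insert u (T j)) > rho;
            bfm_round v c B l rho us R (p(u := q)) (T(j := insert u (T j))) R' p' T' \<rbrakk>
          \<Longrightarrow> bfm_round v c B l rho (u # us) R p T R' p' T'"

text \<open>A complete (terminating) truthful execution of BFM-VM with inputs B, alpha, l,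
  fixed processing order ord (a list enumerating N), final round index M,
  candidate sets S i t (contents at the end of round t), output Sstar and final
  prices pfin.  R t and p t are the set R and the prices at the end of round t.\<close>
definition bfm_run ::
  "'a set \<Rightarrow> ('a set \<Rightarrow> real) \<Rightarrow> ('a \<Rightarrow> real) \<Rightarrow> real \<Rightarrow> real \<Rightarrow> nat \<Rightarrow> 'a list \<Rightarrow>
   nat \<Rightarrow> (nat \<Rightarrow> nat \<Rightarrow> 'a set) \<Rightarrow> 'a set \<Rightarrow> ('a \<Rightarrow> real) \<Rightarrow> bool" where
  "bfm_run N v c B alpha l ord M S Sstar pfin \<longleftrightarrow>
    (\<exists>(R :: nat \<Rightarrow> 'a set) (p :: nat \<Rightarrow> 'a \<Rightarrow> real) u0.
       \<comment> \<open>step 1\<close>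
       R 1 = {u \<in> N. c u \<le> B} \<and> p 1 = (\<lambda>_. B) \<and>
       \<comment> \<open>step 2\<close>
       u0 \<in> R 1 \<and> (\<forall>u\<in>R 1. v {u} \<le> v {u0}) \<and>
       (\<forall>i. S i 1 = (if i = 1 then {u0} else {})) \<and>
       \<comment> \<open>step 3: rounds t = 2..M, with rho_t = alpha^(t-1) * rho_1\<close>
       2 \<le> M \<and>
       (\<forall>t\<in>{2..M}.
          bfm_round v c B l (alpha ^ (t - 1) * v {u0})
            (filter (\<lambda>u. u \<in> R (t - 1) \<and> u \<notin> (\<Union>i\<in>{1..l}. S i (t - 1))) ord)
            (R (t - 1)) (p (t - 1)) (\<lambda>_. {})
            (R t) (p t) (\<lambda>i. S i t)) \<and>
       (\<forall>t\<in>{2..<M}. R t - (\<Union>i\<in>{1..l}. S i (t - 1) \<union> S i t) \<noteq> {}) \<and>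
       R M - (\<Union>i\<in>{1..l}. S i (M - 1) \<union> S i M) = {} \<and>
       \<comment> \<open>step 4\<close>
       Sstar \<in> {S i t | i t. i \<in> {1..l} \<and> t \<in> {M - 1, M}} \<and>
       (\<forall>i\<in>{1..l}. \<forall>t\<in>{M - 1, M}. v (S i t) \<le> v Sstar) \<and>
       pfin = p M)"

end

theory Submission imports Defs begin

lemma round_props:
  assumes "bfm_round v c B l rho us R p T R' p' T'"
  shows "R' \<subseteq> R \<and> (\<forall>i. T i \<subseteq> T' i) \<and> (\<forall>i. T' i \<subseteq> T i \<union> set us)
    \<and> ((\<forall>i\<in>{1..l}. v (T i) \<le> rho) \<longrightarrow> (\<forall>i\<in>{1..l}. v (T' i) \<le> rho))
    \<and> (R' \<subseteq> (R - set us) \<union> (\<Union>i\<in>{1..l}. T' i) \<or> (\<exists>u\<in>set us. \<exists>j\<in>{1..l}. rho < v (insert u (T' j))))"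
  using assms
proof induction
  case (finish R p T)
  show ?case by auto
next
  case (reject j u T q p us R R' p' T')
  note i1 = reject.IH[THEN conjunct1]
  note i2 = reject.IH[THEN conjunct2, THEN conjunct1]
  note i3 = reject.IH[THEN conjunct2, THEN conjunct2, THEN conjunct1]
  note i4 = reject.IH[THEN conjunct2, THEN conjunct2, THEN conjunct2, THEN conjunct1]
  note i5 = reject.IH[THEN conjunct2, THEN conjunct2, THEN conjunct2, THEN conjunct2]
  have a: "R' \<subseteq> R" using i1 by blast
  have b: "\<forall>i. T' i \<subseteq> T i \<union> set (u#us)" using i3 by fastforce
  have e: "R' \<subseteq> (R - set (u#us)) \<union> (\<Union>i\<in>{1..l}. T' i) \<or> (\<exists>u'\<in>set (u#us). \<exists>j\<in>{1..l}. rho < v (insert u' (T' j)))"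
  proof (cases "R' \<subseteq> (R - {u} - set us) \<union> (\<Union>i\<in>{1..l}. T' i)")
    case True
    have "R - {u} - set us = R - set (u#us)" by auto
    then show ?thesis using True by simp
  next
    case False
    then obtain u' j where "u' \<in> set us" "j \<in> {1..l}" "rho < v (insert u' (T' j))" using i5 by blast
    then show ?thesis by (meson list.set_intros(2))
  qed
  show ?case using a i2 b i4 e by (intro conjI)
next
  case (stop j u T q p us R)
  have "\<exists>u'\<in>set (u#us). \<exists>j\<in>{1..l}. rho < v (insert u' (T j))"
    using stop.hyps(1,5) by auto
  then show ?case by auto
next
  case (add j u T q p us R R' p' T')
  note i1 = add.IH[THEN conjunct1]
  note i2 = add.IH[THEN conjunct2, THEN conjunct1]
  note i3 = add.IH[THEN conjunct2, THEN conjunct2, THEN conjunct1]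
  note i4 = add.IH[THEN conjunct2, THEN conjunct2, THEN conjunct2, THEN conjunct1]
  note i5 = add.IH[THEN conjunct2, THEN conjunct2, THEN conjunct2, THEN conjunct2]
  have T1a: "T i \<subseteq> (T(j := insert u (T j))) i" for i by auto
  have T1b: "(T(j := insert u (T j))) i \<subseteq> T i \<union> {u}" for i by auto
  have uT': "u \<in> T' j" using i2 by (metis fun_upd_same insert_subset)
  have b: "\<forall>i. T i \<subseteq> T' i" using i2 T1a by blast
  have c: "\<forall>i. T' i \<subseteq> T i \<union> set (u#us)"
  proof
    fix i show "T' i \<subseteq> T i \<union> set (u#us)" using i3 T1b[of i] by fastforce
  qed
  have d: "(\<forall>i\<in>{1..l}. v (T i) \<le> rho) \<longrightarrow> (\<forall>i\<in>{1..l}. v (T' i) \<le> rho)"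
  proof
    assume h: "\<forall>i\<in>{1..l}. v (T i) \<le> rho"
    have "\<forall>i\<in>{1..l}. v ((T(j := insert u (T j))) i) \<le> rho"
    proof
      fix i assume "i \<in> {1..l}"
      then show "v ((T(j := insert u (T j))) i) \<le> rho" using h add.hyps(5)
        by (cases "i = j") (simp_all add: not_less)
    qed
    then show "\<forall>i\<in>{1..l}. v (T' i) \<le> rho" using i4 by blast
  qed
  have e: "R' \<subseteq> (R - set (u#us)) \<union> (\<Union>i\<in>{1..l}. T' i) \<or> (\<exists>u'\<in>set (u#us). \<exists>j\<in>{1..l}. rho < v (insert u' (T' j)))"
  proof (cases "R' \<subseteq> (R - set us) \<union> (\<Union>i\<in>{1..l}. T' i)")
    case True
    have "R - set us \<subseteq> (R - set (u#us)) \<union> (\<Union>i\<in>{1..l}. T' i)" using uT' add.hyps(1) by auto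
    then show ?thesis using True by blast
  next
    case False
    then obtain u' j' where "u' \<in> set us" "j' \<in> {1..l}" "rho < v (insert u' (T' j'))" using i5 by blast
    then show ?thesis by (meson list.set_intros(2))
  qed
  show ?case using i1 b c d e by (intro conjI)
qed

lemma geo_sum: "((alpha::real) - 1) * (\<Sum>t\<in>{1..n}. alpha ^ (t - 1)) = alpha ^ n - 1"
proof (induction n)
  case 0 then show ?case by simp
next
  case (Suc n)
  have "(\<Sum>t\<in>{1..Suc n}. alpha ^ (t - 1)) = (\<Sum>t\<in>{1..n}. alpha ^ (t - 1)) + alpha ^ n"
    by simp
  then show ?case using Suc by (simp add: algebra_simps)
qed

theorem lemma5p3:
  fixes N :: "'a set" and v :: "'a set \<Rightarrow> real" and c :: "'a \<Rightarrow> real"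
    and B alpha :: real and l M :: nat and ord :: "'a list"
    and S :: "nat \<Rightarrow> nat \<Rightarrow> 'a set" and Sstar :: "'a set" and pfin :: "'a \<Rightarrow> real"
  assumes "finite N"
    and "v {} = 0"
    and "\<forall>X\<subseteq>N. v X \<ge> 0"
    and "submodular_on N v"
    and "\<forall>u\<in>N. c u \<ge> 0"
    and "B > 0" and "alpha > 1" and "l \<in> {1, 2}"
    and "distinct ord" and "set ord = N"
    and "bfm_run N v c B alpha l ord M S Sstar pfin"
  shows "(\<Sum>i\<in>{1..l}. \<Sum>t\<in>{1..M}. v (S i t)) \<le> (4 * alpha - 2) / (alpha - 1) * v Sstar"
proof -
  from assms(11) obtain R p u0 where
    R1: "R 1 = {u \<in> N. c u \<le> B}" and u0: "u0 \<in> R 1"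
    and u0max: "\<forall>u\<in>R 1. v {u} \<le> v {u0}"
    and S1: "\<forall>i. S i 1 = (if i = 1 then {u0} else {})"
    and M2: "2 \<le> M"
    and rounds: "\<forall>t\<in>{2..M}.
          bfm_round v c B l (alpha ^ (t - 1) * v {u0})
            (filter (\<lambda>u. u \<in> R (t - 1) \<and> u \<notin> (\<Union>i\<in>{1..l}. S i (t - 1))) ord)
            (R (t - 1)) (p (t - 1)) (\<lambda>_. {})
            (R t) (p t) (\<lambda>i. S i t)"
    and cont: "\<forall>t\<in>{2..<M}. R t - (\<Union>i\<in>{1..l}. S i (t - 1) \<union> S i t) \<noteq> {}"
    and Vmax: "\<forall>i\<in>{1..l}. \<forall>t\<in>{M - 1, M}. v (S i t) \<le> v Sstar"
    unfolding bfm_run_def by blast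
  define r1 where "r1 = v {u0}"
  define L where "L t = filter (\<lambda>u. u \<in> R (t - 1) \<and> u \<notin> (\<Union>i\<in>{1..l}. S i (t - 1))) ord" for t
  have R1N: "R 1 \<subseteq> N" using R1 by auto
  have r1nn: "0 \<le> r1" using assms(3) u0 R1N unfolding r1_def by auto
  have RP: "R t \<subseteq> R (t - 1) \<and> (\<forall>i. S i t \<subseteq> set (L t))
    \<and> ((\<forall>i\<in>{1..l}. v {} \<le> alpha ^ (t - 1) * r1) \<longrightarrow> (\<forall>i\<in>{1..l}. v (S i t) \<le> alpha ^ (t - 1) * r1))
    \<and> (R t \<subseteq> (R (t - 1) - set (L t)) \<union> (\<Union>i\<in>{1..l}. S i t) \<or>
       (\<exists>u\<in>set (L t). \<exists>j\<in>{1..l}. alpha ^ (t - 1) * r1 < v (insert u (S j t))))"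
    if "t \<in> {2..M}" for t
    using round_props[OF rounds[rule_format, OF that]] unfolding L_def r1_def by auto
  have Rsub: "R t \<subseteq> R 1" if "t \<in> {1..M}" for t
    using that
  proof (induction t)
    case 0 then show ?case by simp
  next
    case (Suc t)
    show ?case
    proof (cases "t = 0")
      case True then show ?thesis by simp
    next
      case False
      then have "Suc t \<in> {2..M}" using Suc by auto
      then have "R (Suc t) \<subseteq> R t" using RP by fastforce
      then show ?thesis using Suc False by auto
    qed
  qed
  have SN: "S i t \<subseteq> N" if "t \<in> {1..M}" for i t
  proof (cases "t = 1")
    case True then show ?thesis using S1 u0 R1N by auto
  next
    case False
    then have "t \<in> {2..M}" using that by auto
    then have "S i t \<subseteq> set (L t)" using RP by blast
    also have "\<dots> \<subseteq> N" unfolding L_def using assms(10) by auto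
    finally show ?thesis .
  qed
  have Sb: "v (S i t) \<le> alpha ^ (t - 1) * r1" if "i \<in> {1..l}" "t \<in> {1..M}" for i t
  proof (cases "t = 1")
    case True then show ?thesis using S1 r1nn assms(2) unfolding r1_def by auto
  next
    case False
    then have t2: "t \<in> {2..M}" using that by auto
    have "0 \<le> alpha ^ (t - 1) * r1" using r1nn assms(7) by simp
    then show ?thesis using RP[OF t2] that assms(2) by auto
  qed
  define V where "V = v Sstar"
  have V0: "0 \<le> V"
  proof -
    have "1 \<in> {1..l}" using assms(8) by auto
    then have "v (S 1 M) \<le> V" using Vmax unfolding V_def by auto
    moreover have "0 \<le> v (S 1 M)" using assms(3) SN[of M 1] M2 by auto
    ultimately show ?thesis by linarith
  qed
  have key: "alpha ^ (M - 2) * r1 - r1 < V" if M3: "3 \<le> M"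
  proof -
    define t where "t = M - 1"
    have t2: "t \<in> {2..M}" and t2': "t \<in> {2..<M}" using M3 unfolding t_def by auto
    have tm: "t - 1 = M - 2" unfolding t_def by simp
    have "\<exists>u\<in>set (L t). \<exists>j\<in>{1..l}. alpha ^ (t - 1) * r1 < v (insert u (S j t))"
    proof (rule ccontr)
      assume "\<not> ?thesis"
      then have A: "R t \<subseteq> (R (t - 1) - set (L t)) \<union> (\<Union>i\<in>{1..l}. S i t)" using RP[OF t2] by blast
      have "t - 1 \<in> {1..M}" using t2 by auto
      then have "R (t - 1) \<subseteq> N" using Rsub[of "t - 1"] R1N by blast
      then have "R (t - 1) - set (L t) \<subseteq> (\<Union>i\<in>{1..l}. S i (t - 1))"
        unfolding L_def using assms(10) by auto
      then have "R t - (\<Union>i\<in>{1..l}. S i (t - 1) \<union> S i t) = {}" using A by blast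
      then show False using cont t2' by blast
    qed
    then obtain u j where u: "u \<in> set (L t)" and j: "j \<in> {1..l}"
      and gt: "alpha ^ (t - 1) * r1 < v (insert u (S j t))" by blast
    have uR: "u \<in> R (t - 1)" using u unfolding L_def by auto
    have "t - 1 \<in> {1..M}" using t2 by auto
    then have "R (t - 1) \<subseteq> R 1" using Rsub[of "t - 1"] by blast
    then have uR1: "u \<in> R 1" using uR by auto
    then have uN: "u \<in> N" and vu: "v {u} \<le> r1" using R1N u0max unfolding r1_def by auto
    have vu0: "0 \<le> v {u}" using assms(3) uN by auto
    have SjN: "S j t \<subseteq> N" using SN t2 by auto
    have sub: "v (insert u (S j t)) \<le> v (S j t) + v {u}"
    proof (cases "u \<in> S j t")
      case True then show ?thesis using vu0 by (simp add: insert_absorb)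
    next
      case False
      have "marg v u (S j t) \<le> marg v u {}"
        using assms(4) SjN uN False unfolding submodular_on_def by blast
      then show ?thesis using assms(2) unfolding marg_def by simp
    qed
    have "v (S j t) \<le> V" using Vmax j unfolding V_def t_def by auto
    moreover have "alpha ^ (t - 1) * r1 = alpha ^ (M - 2) * r1" using tm by simp
    ultimately show ?thesis using gt sub vu by linarith
  qed
  have am1: "0 < alpha - 1" using assms(7) by simp
  have per_i: "(\<Sum>t\<in>{1..M}. v (S i t)) \<le> V / (alpha - 1) + 2 * V" if i: "i \<in> {1..l}" for i
  proof -
    have split: "{1..M} = {1..M-2} \<union> {M - 1, M}" using M2 by auto
    have disj: "{1..M-2} \<inter> {M - 1, M} = {}" using M2 by auto
    have neq: "M - 1 \<noteq> M" using M2 by simp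
    have "(\<Sum>t\<in>{1..M}. v (S i t)) = (\<Sum>t\<in>{1..M-2}. v (S i t)) + (v (S i (M - 1)) + v (S i M))"
      unfolding split by (subst sum.union_disjoint) (use disj neq in auto)
    also have "v (S i (M - 1)) + v (S i M) \<le> 2 * V" using Vmax i unfolding V_def by fastforce
    also have "(\<Sum>t\<in>{1..M-2}. v (S i t)) \<le> (\<Sum>t\<in>{1..M-2}. alpha ^ (t - 1) * r1)"
      by (rule sum_mono) (use Sb i in auto)
    also have "\<dots> \<le> V / (alpha - 1)"
    proof -
      have eq: "(alpha - 1) * (\<Sum>t\<in>{1..M-2}. alpha ^ (t - 1) * r1) = alpha ^ (M - 2) * r1 - r1"
      proof -
        have "(\<Sum>t\<in>{1..M-2}. alpha ^ (t - 1) * r1) = (\<Sum>t\<in>{1..M-2}. alpha ^ (t - 1)) * r1"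
          by (simp add: sum_distrib_right)
        then show ?thesis using geo_sum[of alpha "M - 2"]
          by (metis left_diff_distrib mult.assoc mult_1)
      qed
      have "alpha ^ (M - 2) * r1 - r1 \<le> V"
      proof (cases "M = 2")
        case True then show ?thesis using V0 by simp
      next
        case False then show ?thesis using key M2 by fastforce
      qed
      then have "(alpha - 1) * (\<Sum>t\<in>{1..M-2}. alpha ^ (t - 1) * r1) \<le> V" using eq by simp
      then show ?thesis using am1 by (simp add: field_simps mult.commute)
    qed
    finally show ?thesis by simp
  qed
  have "(\<Sum>i\<in>{1..l}. \<Sum>t\<in>{1..M}. v (S i t)) \<le> of_nat (card {1..l}) * (V / (alpha - 1) + 2 * V)"
    by (rule sum_bounded_above) (use per_i in auto)
  also have "\<dots> \<le> 2 * (V / (alpha - 1) + 2 * V)"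
  proof (rule mult_right_mono)
    show "real (card {1..l}) \<le> 2" using assms(8) by auto
    show "0 \<le> V / (alpha - 1) + 2 * V" using V0 am1 by simp
  qed
  also have "\<dots> = (4 * alpha - 2) / (alpha - 1) * V" using am1 by (simp add: field_simps)
  finally show ?thesis unfolding V_def .
qed

end
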